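(* Let $A\in\mathbb{F}_q^{m\times k}$ be a nonzero matrix and let $S\subseteq\mathbb{F}_q^n$ satisfy $|S|\ge q^{1+(1-\frac1k)n}$. Then there exist $(x_1,\dots,x_k),(y_1,\dots,y_k)\in S^k$ such that for all $b=(b_1,\dots,b_k)\in\mathbb{F}_q^k$ one has $b_1x_1+\dots+b_kx_k=b_1y_1+\dots+b_ky_k$ if and only if $b$ is a linear combination of the rows of $A$. *)

theory Defs
  imports "HOL-Analysis.Analysis"
begin

definition lin_comb :: "('a::field) ^ 'k \<Rightarrow> ('k::finite \<Rightarrow> 'a ^ 'n) \<Rightarrow> 'a ^ 'n" where
  "lin_comb b x = (\<chi> l. \<Sum>j\<in>UNIV. b $ j * (x j) $ l)"

definition in_row_space :: "('a::field) ^ 'k ^ 'm::finite \<Rightarrow> 'a ^ 'k \<Rightarrow> bool" where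
  "in_row_space A b \<longleftrightarrow> (\<exists>c :: 'a ^ 'm. b = (\<chi> j. \<Sum>i\<in>UNIV. c $ i * A $ i $ j))"

end

theory Submission
  imports Defs "HOL-Library.FuncSet"
begin

lemma lin_comb_nth: "lin_comb b x $ l = (\<Sum>j\<in>UNIV. b$j * x j $ l)"
  by (simp add: lin_comb_def)

lemma lin_comb_diff: "lin_comb (b - b') x = lin_comb b x - lin_comb b' x"
  by (simp add: vec_eq_iff lin_comb_nth algebra_simps sum_subtractf)

lemma lin_comb_sum:
  "lin_comb (\<Sum>p\<in>P. f p *s g p) x = (\<Sum>p\<in>P. f p *s lin_comb (g p) x)"
proof -
  have "\<And>l. (\<Sum>j\<in>UNIV. (\<Sum>p\<in>P. f p * g p $ j) * x j $ l) = (\<Sum>p\<in>P. f p * (\<Sum>j\<in>UNIV. g p $ j * x j $ l))"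
    by (simp add: sum_distrib_left sum_distrib_right mult.assoc sum.swap[of _ UNIV P])
  thus ?thesis by (simp add: vec_eq_iff lin_comb_nth)
qed

lemma card_vec_le: "CARD('a::finite ^ 'n::finite) \<le> CARD('a) ^ CARD('n)"
proof -
  have "inj (vec_nth :: 'a^'n \<Rightarrow> _)" by (simp add: inj_on_def vec_eq_iff fun_eq_iff)
  moreover have "range (vec_nth :: 'a^'n \<Rightarrow> _) \<subseteq> PiE UNIV (\<lambda>_. UNIV)" by simp
  ultimately have "CARD('a ^ 'n) \<le> card (PiE (UNIV::'n set) (\<lambda>_. UNIV::'a set))"
    by (metis card_image card_mono finite_PiE finite_class.finite_UNIV)
  thus ?thesis by (simp add: card_PiE)
qed

lemma reduced_basis:
  fixes R :: "('a::field ^ 'k::finite) set"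
  assumes z: "0 \<in> R" and add: "\<And>u v. u\<in>R \<Longrightarrow> v\<in>R \<Longrightarrow> u+v\<in>R"
    and sc: "\<And>a u. u\<in>R \<Longrightarrow> a *s u \<in> R"
  obtains P where "\<forall>t::'k\<Rightarrow>'a. \<exists>u\<in>R. \<forall>p\<in>P. u$p = t p"
    and "\<forall>u\<in>R. (\<forall>p\<in>P. u$p = 0) \<longrightarrow> u = 0"
proof -
  let ?G = "\<lambda>P. \<forall>t::'k\<Rightarrow>'a. \<exists>u\<in>R. \<forall>p\<in>P. u$p = t p"
  have "\<exists>n. (\<exists>P. ?G P \<and> card P = n) \<and> (\<forall>m. (\<exists>P. ?G P \<and> card P = m) \<longrightarrow> m \<le> n)"
  proof -
    have a: "\<exists>P. ?G P \<and> card P = 0" using z by (intro exI[of _ "{}"]) auto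
    have b: "\<forall>m. (\<exists>P. ?G P \<and> card P = m) \<longrightarrow> m \<le> CARD('k)"
      by (auto intro: card_mono)
    show ?thesis using Nat.ex_has_greatest_nat[of "\<lambda>n. \<exists>P. ?G P \<and> card P = n", OF a b] by blast
  qed
  then obtain P where GP: "?G P" and mx: "\<And>P'. ?G P' \<Longrightarrow> card P' \<le> card P" by blast
  have "\<forall>u\<in>R. (\<forall>p\<in>P. u$p = 0) \<longrightarrow> u = 0"
  proof (intro ballI impI, rule ccontr)
    fix u assume uR: "u \<in> R" and u0: "\<forall>p\<in>P. u$p = 0" and nz: "u \<noteq> 0"
    then obtain j where j: "u$j \<noteq> 0" by (auto simp: vec_eq_iff)
    with u0 have jP: "j \<notin> P" by auto
    have "?G (insert j P)"
    proof
      fix t :: "'k \<Rightarrow> 'a"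
      obtain w where wR: "w \<in> R" and wt: "\<forall>p\<in>P. w$p = t p" using GP by blast
      let ?w = "w + ((t j - w$j) / u$j) *s u"
      have "?w \<in> R" using wR uR add sc by blast
      moreover have "\<forall>p\<in>insert j P. ?w$p = t p" using wt u0 j by auto
      ultimately show "\<exists>u\<in>R. \<forall>p\<in>insert j P. u$p = t p" by blast
    qed
    from mx[OF this] jP show False by simp
  qed
  with GP that show ?thesis by blast
qed

lemma sum_ind_mult: "(\<Sum>ib\<in>(UNIV::'b::finite set). (if ib = i then 1 else 0) * f ib) = (f i :: 'a::field)"
proof -
  have "(\<Sum>ib\<in>UNIV. (if ib = i then 1 else 0) * f ib) = (\<Sum>ib\<in>UNIV. if ib = i then f ib else 0)"
    by (rule sum.cong) auto
  thus ?thesis by simp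
qed

lemma card_Compl': "card (- (P::'b::finite set)) = CARD('b) - card P"
  by (simp add: Compl_eq_Diff_UNIV card_Diff_subset)

lemma lin_comb_cancel:
  fixes c :: "'a::field ^ 'k::finite"
  assumes e: "lin_comb c y1 = lin_comb c y2" and nz: "c$j0 \<noteq> 0"
    and oth: "\<forall>j. j \<noteq> j0 \<longrightarrow> c$j = 0 \<or> y1 j = y2 j"
  shows "y1 j0 = y2 j0"
proof -
  have "y1 j0 $ l = y2 j0 $ l" for l
  proof -
    have "(\<Sum>j\<in>UNIV. c$j * y1 j $ l) = (\<Sum>j\<in>UNIV. c$j * y2 j $ l)"
      using e by (metis lin_comb_nth)
    hence "c$j0 * y1 j0 $ l + (\<Sum>j\<in>UNIV-{j0}. c$j * y1 j $ l) = c$j0 * y2 j0 $ l + (\<Sum>j\<in>UNIV-{j0}. c$j * y2 j $ l)"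
      by (simp add: sum.remove[of UNIV j0])
    moreover have "(\<Sum>j\<in>UNIV-{j0}. c$j * y1 j $ l) = (\<Sum>j\<in>UNIV-{j0}. c$j * y2 j $ l)"
      by (rule sum.cong) (use oth in auto)
    ultimately show ?thesis using nz by simp
  qed
  thus ?thesis by (simp add: vec_eq_iff)
qed

lemma real_ineq:
  fixes kk rr nn :: real
  assumes "nn / kk \<ge> 1" "kk > 0" "rr \<ge> 1" "kk - rr - 1 \<ge> 0"
  shows "(rr+1) * (1 + (1 - 1/kk) * nn) > kk - rr + nn * rr"
proof -
  define t where "t = nn / kk"
  have nn: "nn = t * kk" using assms(2) by (simp add: t_def)
  have "t * (kk - rr - 1) \<ge> kk - rr - 1" using assms(1,4) t_def
    by (metis mult_le_cancel_right1 not_le order_le_less)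
  moreover have "(rr+1) * (1 + (1 - 1/kk) * nn) - (kk - rr + nn * rr) = 2*rr + 1 - kk + t * (kk - rr - 1)"
    using assms(2) by (simp add: nn field_simps)
  ultimately show ?thesis using assms(3) by linarith
qed

theorem lemma4p1:
  fixes A :: "('a::{field,finite}) ^ 'k::finite ^ 'm::finite"
    and S :: "('a ^ 'n::finite) set"
  assumes "A \<noteq> 0"
    and "real (card S) \<ge> real CARD('a) powr (1 + (1 - 1 / real CARD('k)) * real CARD('n))"
  shows "\<exists>x y :: 'k \<Rightarrow> 'a ^ 'n. (\<forall>j. x j \<in> S) \<and> (\<forall>j. y j \<in> S) \<and>
           (\<forall>b :: 'a ^ 'k. lin_comb b x = lin_comb b y \<longleftrightarrow> in_row_space A b)"
proof -
  define R where "R = {b::'a^'k. in_row_space A b}"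
  have R0: "0 \<in> R" unfolding R_def in_row_space_def
    by (intro CollectI exI[of _ 0]) (simp add: vec_eq_iff)
  have Radd: "u + v \<in> R" if uv: "u \<in> R" "v \<in> R" for u v
  proof -
    obtain c c' where "u = (\<chi> j. \<Sum>i\<in>UNIV. c $ i * A $ i $ j)" "v = (\<chi> j. \<Sum>i\<in>UNIV. c' $ i * A $ i $ j)"
      using uv unfolding R_def in_row_space_def by blast
    thus ?thesis unfolding R_def in_row_space_def
      by (intro CollectI exI[of _ "c + c'"]) (simp add: vec_eq_iff algebra_simps sum.distrib)
  qed
  have Rsc: "a *s u \<in> R" if uR: "u \<in> R" for a u
  proof -
    obtain c where "u = (\<chi> j. \<Sum>i\<in>UNIV. c $ i * A $ i $ j)"
      using uR unfolding R_def in_row_space_def by blast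
    thus ?thesis unfolding R_def in_row_space_def
      by (intro CollectI exI[of _ "a *s c"]) (simp add: vec_eq_iff sum_distrib_left mult.assoc)
  qed
  have Rdiff: "u - v \<in> R" if "u \<in> R" "v \<in> R" for u v
  proof -
    have eq: "u - v = u + (-1) *s v" by (simp add: vec_eq_iff)
    show ?thesis unfolding eq by (rule Radd[OF that(1) Rsc[OF that(2)]])
  qed
  have Rsum: "(\<forall>i\<in>I. g i \<in> R) \<Longrightarrow> sum g I \<in> R" if "finite I" for I and g :: "'b \<Rightarrow> 'a^'k"
    using that by (induction I rule: finite_induct) (auto intro: R0 Radd)
  obtain P where surjP: "\<forall>t::'k\<Rightarrow>'a. \<exists>u\<in>R. \<forall>p\<in>P. u$p = t p"
    and injP: "\<forall>u\<in>R. (\<forall>p\<in>P. u$p = 0) \<longrightarrow> u = 0"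
    using reduced_basis[OF R0 Radd Rsc] by blast
  define cb where "cb p = (SOME u. u \<in> R \<and> (\<forall>p'\<in>P. u$p' = (if p' = p then 1 else 0)))" for p
  have cb: "cb p \<in> R \<and> (\<forall>p'\<in>P. cb p $ p' = (if p' = p then 1 else 0))" for p
    unfolding cb_def by (rule someI_ex) (use surjP[rule_format, of "\<lambda>p'. if p' = p then 1 else 0"] in blast)
  define pr where "pr b = (\<Sum>p\<in>P. b$p *s cb p)" for b
  have pr_P: "pr b $ p' = b $ p'" if "p' \<in> P" for b p'
  proof -
    have "pr b $ p' = (\<Sum>p\<in>P. if p = p' then b$p else 0)"
      unfolding pr_def sum_component vector_smult_component
      by (rule sum.cong) (use cb that in auto)
    thus ?thesis using that by simp
  qed
  have prR: "pr b \<in> R" for b unfolding pr_def by (rule Rsum) (use cb Rsc in auto)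
  have decomp: "pr b = b" if "b \<in> R" for b
  proof -
    have "b - pr b \<in> R" using Rdiff that prR by blast
    moreover have "\<forall>p\<in>P. (b - pr b) $ p = 0" using pr_P by simp
    ultimately show ?thesis using injP by auto
  qed
  have Pne: "P \<noteq> {}"
  proof
    assume P0: "P = {}"
    obtain i where Ai: "A $ i \<noteq> 0" using assms(1) by (auto simp: vec_eq_iff)
    have "A $ i \<in> R" unfolding R_def in_row_space_def
      by (intro CollectI exI[of _ "\<chi> i'. if i' = i then 1 else 0"]) (simp add: vec_eq_iff sum_ind_mult)
    with injP P0 Ai show False by auto
  qed
  define r where "r = card P"
  define q where "q = CARD('a)"
  define K where "K = CARD('k)"
  define N where "N = CARD('n)"
  define s where "s = card S"
  have r1: "r \<ge> 1" using Pne by (simp add: r_def Suc_le_eq card_gt_0_iff)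
  have rK: "r \<le> K" unfolding r_def K_def by (rule card_mono) auto
  have q2: "q \<ge> 2"
  proof -
    have "card {0::'a, 1} \<le> CARD('a)" by (rule card_mono) auto
    thus ?thesis unfolding q_def by simp
  qed
  have sqN: "s \<le> q ^ N" unfolding s_def q_def N_def
    using card_mono[of UNIV S] card_vec_le[where 'a='a and 'n='n] by auto
  define SK where "SK = {x::'k \<Rightarrow> 'a^'n. \<forall>j. x j \<in> S}"
  have SK_eq: "SK = PiE UNIV (\<lambda>_. S)" by (auto simp: SK_def PiE_UNIV_domain Pi_def)
  have cardSK: "card SK = s ^ K" by (simp add: SK_eq card_PiE s_def K_def)
  have finSK: "finite SK" by (simp add: SK_eq finite_PiE)
  define \<phi> where "\<phi> y = (\<lambda>p\<in>P. lin_comb (cb p) y)" for y :: "'k \<Rightarrow> 'a^'n"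
  have card_img: "card (\<phi> ` SK) \<le> q ^ (N * r)"
  proof -
    have "\<phi> ` SK \<subseteq> PiE P (\<lambda>_. UNIV)" by (auto simp: \<phi>_def)
    hence "card (\<phi> ` SK) \<le> card (PiE P (\<lambda>_. UNIV :: ('a^'n) set))"
      by (intro card_mono finite_PiE) auto
    also have "\<dots> = CARD('a^'n) ^ r" by (simp add: card_PiE r_def)
    also have "\<dots> \<le> (q ^ N) ^ r" unfolding q_def N_def by (intro power_mono card_vec_le) auto
    finally show ?thesis by (simp add: power_mult)
  qed
  define fib where "fib v = {y\<in>SK. \<phi> y = v}" for v
  define f where "f v = card (fib v)" for v
  have finimg: "finite (\<phi> ` SK)" using finSK by simp
  have neimg: "\<phi> ` SK \<noteq> {}"
  proof -
    have "S \<noteq> {}"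
    proof
      assume "S = {}"
      hence "real (card S) = 0" by simp
      moreover have "real CARD('a) powr (1 + (1 - 1 / real CARD('k)) * real CARD('n)) > 0"
        using q2 q_def by simp
      ultimately show False using assms(2) by linarith
    qed
    then obtain a where "a \<in> S" by blast
    hence "(\<lambda>_. a) \<in> SK" by (simp add: SK_def)
    thus ?thesis by blast
  qed
  obtain v0 where v0: "v0 \<in> \<phi> ` SK" and v0max: "\<forall>v\<in>\<phi> ` SK. f v \<le> f v0"
  proof -
    have fi: "finite (f ` \<phi> ` SK)" using finimg by simp
    have ne: "f ` \<phi> ` SK \<noteq> {}" using neimg by simp
    have "Max (f ` \<phi> ` SK) \<in> f ` \<phi> ` SK" by (rule Max_in[OF fi ne])
    then obtain v0 where "v0 \<in> \<phi> ` SK" "f v0 = Max (f ` \<phi> ` SK)"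
      by (metis imageE)
    moreover have "\<forall>v\<in>\<phi> ` SK. f v \<le> Max (f ` \<phi> ` SK)" using Max_ge[OF fi] by blast
    ultimately show ?thesis using that by auto
  qed
  have SKU: "SK = (\<Union>v\<in>\<phi> ` SK. fib v)" by (auto simp: fib_def)
  have "s ^ K \<le> (\<Sum>v\<in>\<phi> ` SK. f v)"
    unfolding f_def cardSK[symmetric] by (subst SKU) (rule card_UN_le[OF finimg])
  also have "\<dots> \<le> card (\<phi> ` SK) * f v0" using sum_bounded_above[of "\<phi> ` SK" f "f v0"] v0max by simp
  also have "\<dots> \<le> q ^ (N * r) * f v0" using card_img by simp
  finally have main: "s ^ K \<le> q ^ (N * r) * f v0" .
  obtain x where xf: "x \<in> fib v0" using v0 by (auto simp: fib_def)
  have finfib: "finite (fib v0)" using finSK by (simp add: fib_def)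
  have key: "\<exists>y\<in>fib v0. \<forall>c. (\<forall>p\<in>P. c$p = 0) \<and> c \<noteq> 0 \<longrightarrow> lin_comb c y \<noteq> lin_comb c x"
  proof (cases "P = UNIV")
    case True
    thus ?thesis using xf by (auto simp: vec_eq_iff)
  next
    case False
    have rK': "r < K" using False rK unfolding r_def K_def
      by (metis card_subset_eq finite_class.finite_UNIV le_neq_implies_less subset_UNIV)
    define V0 where "V0 = {c::'a^'k. (\<forall>p\<in>P. c$p = 0) \<and> c \<noteq> 0}"
    define B where "B c = {y\<in>fib v0. lin_comb c y = lin_comb c x}" for c
    have cardB: "card (B c) \<le> s ^ (K - r - 1)" if cV: "c \<in> V0" for c
    proof -
      obtain j0 where j0: "c $ j0 \<noteq> 0" using cV by (auto simp: V0_def vec_eq_iff)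
      have j0P: "j0 \<notin> P" using j0 cV by (auto simp: V0_def)
      define Q where "Q = - P - {j0}"
      have cardQ: "card Q = K - r - 1" unfolding Q_def
        using j0P by (simp add: card_Compl' K_def r_def)
      have "inj_on (\<lambda>y. restrict y Q) (B c)"
      proof (rule inj_onI)
        fix y1 y2 assume y1: "y1 \<in> B c" and y2: "y2 \<in> B c" and eq: "restrict y1 Q = restrict y2 Q"
        have aQ: "y1 j = y2 j" if "j \<in> Q" for j using eq that by (metis restrict_apply')
        have aj0: "y1 j0 = y2 j0"
        proof (rule lin_comb_cancel[OF _ j0])
          show "lin_comb c y1 = lin_comb c y2" using y1 y2 by (simp add: B_def)
          show "\<forall>j. j \<noteq> j0 \<longrightarrow> c $ j = 0 \<or> y1 j = y2 j"
            using aQ cV by (auto simp: V0_def Q_def)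
        qed
        have aP: "y1 p = y2 p" if pP: "p \<in> P" for p
        proof (rule lin_comb_cancel[where c="cb p"])
          have "\<phi> y1 p = \<phi> y2 p" using y1 y2 by (simp add: B_def fib_def)
          thus "lin_comb (cb p) y1 = lin_comb (cb p) y2" using pP by (simp add: \<phi>_def)
          show "cb p $ p \<noteq> 0" using cb pP by simp
          show "\<forall>j. j \<noteq> p \<longrightarrow> cb p $ j = 0 \<or> y1 j = y2 j"
          proof (intro allI impI)
            fix j assume jp: "j \<noteq> p"
            show "cb p $ j = 0 \<or> y1 j = y2 j"
            proof (cases "j \<in> P")
              case True thus ?thesis using cb[of p] jp by auto
            next
              case False thus ?thesis using aQ aj0 by (cases "j = j0") (auto simp: Q_def)
            qed
          qed
        qed
        show "y1 = y2"
        proof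
          fix j show "y1 j = y2 j" using aP aQ aj0 by (cases "j \<in> P"; cases "j = j0") (auto simp: Q_def)
        qed
      qed
      moreover have "(\<lambda>y. restrict y Q) ` B c \<subseteq> PiE Q (\<lambda>_. S)"
        by (auto simp: B_def fib_def SK_def)
      ultimately have "card (B c) \<le> card (PiE Q (\<lambda>_. S))"
        by (intro card_inj_on_le) (auto intro: finite_PiE)
      thus ?thesis by (simp add: card_PiE cardQ s_def)
    qed
    have cardV0: "card V0 \<le> q ^ (K - r)"
    proof -
      have "inj_on (\<lambda>c. restrict (vec_nth c) (-P)) V0"
      proof (rule inj_onI)
        fix c1 c2 assume h1: "c1 \<in> V0" and h2: "c2 \<in> V0" and h: "restrict (vec_nth c1) (-P) = restrict (vec_nth c2) (-P)"
        show "c1 = c2" unfolding vec_eq_iff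
        proof
          fix j show "c1 $ j = c2 $ j"
          proof (cases "j \<in> P")
            case True thus ?thesis using h1 h2 by (simp add: V0_def)
          next
            case False
            hence "restrict (vec_nth c1) (-P) j = restrict (vec_nth c2) (-P) j" using h by simp
            thus ?thesis using False by simp
          qed
        qed
      qed
      moreover have "(\<lambda>c. restrict (vec_nth c) (-P)) ` V0 \<subseteq> PiE (-P) (\<lambda>_. UNIV)" by auto
      ultimately have "card V0 \<le> card (PiE (-P) (\<lambda>_. UNIV :: 'a set))"
        by (intro card_inj_on_le) (auto intro: finite_PiE)
      thus ?thesis by (simp add: card_PiE card_Compl' q_def K_def r_def)
    qed
    have finV0: "finite V0" by simp
    have "card (\<Union>c\<in>V0. B c) \<le> (\<Sum>c\<in>V0. card (B c))" by (rule card_UN_le[OF finV0])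
    also have "\<dots> \<le> card V0 * s ^ (K - r - 1)" using sum_bounded_above[of V0 "\<lambda>c. card (B c)"] cardB by simp
    also have "\<dots> \<le> q ^ (K - r) * s ^ (K - r - 1)" using cardV0 by simp
    also have "\<dots> < f v0"
    proof -
      have N_ge: "real N \<ge> real K"
      proof -
        have "real q powr (1 + (1 - 1 / real K) * real N) \<le> real q powr real N"
          using assms(2) sqN unfolding q_def K_def N_def s_def
          by (smt (verit) of_nat_0_less_iff of_nat_le_iff of_nat_power powr_realpow q2 q_def zero_less_card_finite)
        hence "1 + (1 - 1 / real K) * real N \<le> real N" using q2 by simp
        hence "real N / real K \<ge> 1" by (simp add: field_simps)
        moreover have "real K > 0" unfolding K_def by simp
        ultimately show ?thesis by (simp add: field_simps)
      qed
      have Kpos: "real K > 0" unfolding K_def by simp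
      have ineq: "real (r+1) * (1 + (1 - 1/real K) * real N) > real (K - r + N * r)"
        using real_ineq[of "real N" "real K" "real r"] N_ge Kpos r1 rK'
        by (simp add: of_nat_diff field_simps)
      have "real (q ^ (K - r + N * r)) = real q powr real (K - r + N * r)"
      proof -
        have qpos: "real q > 0" using q2 by simp
        show ?thesis by (simp only: of_nat_power powr_realpow[OF qpos])
      qed
      also have "\<dots> < real q powr (real (r+1) * (1 + (1 - 1/real K) * real N))"
        using q2 ineq by simp
      also have "\<dots> = (real q powr (1 + (1 - 1/real K) * real N)) ^ (r+1)"
      proof -
        have qne: "real q \<noteq> 0" using q2 by simp
        show ?thesis by (simp only: powr_power[OF qne])
      qed
      also have "\<dots> \<le> real s ^ (r+1)"
        using assms(2) unfolding q_def K_def N_def s_def by (intro power_mono) auto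
      finally have "q ^ (K - r + N * r) < s ^ (r+1)" by (metis of_nat_less_iff of_nat_power)
      moreover have "s > 0" using calculation by (cases s) auto
      ultimately have "q ^ (K - r + N * r) * s ^ (K - r - 1) < s ^ (r+1) * s ^ (K - r - 1)"
        by simp
      also have "\<dots> = s ^ K"
      proof -
        have "r + 1 + (K - r - 1) = K" using rK' by simp
        thus ?thesis by (metis power_add)
      qed
      finally have lt1: "q ^ (K - r + N * r) * s ^ (K - r - 1) < s ^ K" .
      have eq: "q ^ (K - r + N * r) * s ^ (K - r - 1) = (q ^ (K - r) * s ^ (K - r - 1)) * q ^ (N * r)"
        by (simp only: power_add mult_ac)
      have "(q ^ (K - r) * s ^ (K - r - 1)) * q ^ (N * r) < q ^ (N * r) * f v0"
        using lt1 main unfolding eq by linarith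
      hence "(q ^ (K - r) * s ^ (K - r - 1)) * q ^ (N * r) < f v0 * q ^ (N * r)"
        by (simp only: mult.commute[of "q ^ (N * r)"])
      thus ?thesis using mult_less_cancel2 by blast
    qed
    finally have lt: "card (\<Union>c\<in>V0. B c) < card (fib v0)" by (simp add: f_def)
    have "\<not> fib v0 \<subseteq> (\<Union>c\<in>V0. B c)"
    proof
      assume sub: "fib v0 \<subseteq> (\<Union>c\<in>V0. B c)"
      have "finite (\<Union>c\<in>V0. B c)" by (rule finite_subset[OF _ finfib]) (auto simp: B_def)
      hence "card (fib v0) \<le> card (\<Union>c\<in>V0. B c)" using card_mono sub by blast
      thus False using lt by simp
    qed
    then obtain y where "y \<in> fib v0" "y \<notin> (\<Union>c\<in>V0. B c)" by blast
    hence "\<forall>c. (\<forall>p\<in>P. c$p = 0) \<and> c \<noteq> 0 \<longrightarrow> lin_comb c y \<noteq> lin_comb c x"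
      by (auto simp: V0_def B_def)
    with \<open>y \<in> fib v0\<close> show ?thesis by blast
  qed
  then obtain y where yf: "y \<in> fib v0"
    and yg: "\<And>c. (\<forall>p\<in>P. c$p = 0) \<Longrightarrow> c \<noteq> 0 \<Longrightarrow> lin_comb c y \<noteq> lin_comb c x" by blast
  have eqcb: "lin_comb (cb p) x = lin_comb (cb p) y" if "p \<in> P" for p
  proof -
    have "\<phi> x p = \<phi> y p" using xf yf by (simp add: fib_def)
    thus ?thesis using that by (simp add: \<phi>_def)
  qed
  have eqpr: "lin_comb (pr b) x = lin_comb (pr b) y" for b
    unfolding pr_def lin_comb_sum by (rule sum.cong) (use eqcb in auto)
  have "\<forall>b :: 'a ^ 'k. lin_comb b x = lin_comb b y \<longleftrightarrow> in_row_space A b"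
  proof (intro allI iffI)
    fix b assume "in_row_space A b"
    hence "pr b = b" using decomp R_def by simp
    thus "lin_comb b x = lin_comb b y" using eqpr by metis
  next
    fix b assume h: "lin_comb b x = lin_comb b y"
    have "lin_comb (b - pr b) x = lin_comb (b - pr b) y" by (simp add: lin_comb_diff h eqpr)
    moreover have "\<forall>p\<in>P. (b - pr b) $ p = 0" using pr_P by simp
    ultimately have "b - pr b = 0" using yg by metis
    hence "b = pr b" by simp
    thus "in_row_space A b" using prR R_def by (metis mem_Collect_eq)
  qed
  moreover have "\<forall>j. x j \<in> S" "\<forall>j. y j \<in> S" using xf yf by (auto simp: fib_def SK_def)
  ultimately show ?thesis by blast
qed

end
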